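(* Let $a,b,h\in\mathbb{R}$ with $h>0$ and $\frac{b-a}{h}\in\mathbb{N}\setminus\{1\}$, let $\gamma,A\ge0$ and $\mu=\frac{4}{h^2}\sin^2\big(\frac{\pi h}{4(b-a)}\big)$. Then the problem $$-D_h^+D_h^-v(x)=\mu v(x)-A\ \ (x\in(a,b)_h),\qquad v(a)=\gamma,\ v(b)=0,$$ has the unique solution $$v(x)=\Big(\gamma-\frac{A}{\mu}\Big)\cos\Big(\frac{\pi(x-a)}{2(b-a)}\Big)-\frac{A}{\mu}\sin\Big(\frac{\pi(x-a)}{2(b-a)}\Big)+\frac{A}{\mu},\quad x\in[a,b]_h,$$ and it satisfies $-D_h^+v(a)\le\big(\gamma+(b-a)^2A\big)\frac{\pi}{2(b-a)}$.
   Context: $[a,b]_h=[a,b]\cap(a+h\mathbb{Z})$, $(a,b)_h=(a,b)\cap(a+h\mathbb{Z})$. $D_h^+v(x)=\frac{v(x+h)-v(x)}{h}$, $D_h^-v(x)=\frac{v(x)-v(x-h)}{h}$. *)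

theory Defs
  imports Complex_Main
begin

definition grid_cc :: "real \<Rightarrow> real \<Rightarrow> real \<Rightarrow> real set" where
  "grid_cc a b h = {x. a \<le> x \<and> x \<le> b \<and> (\<exists>k::int. x = a + of_int k * h)}"

definition grid_oo :: "real \<Rightarrow> real \<Rightarrow> real \<Rightarrow> real set" where
  "grid_oo a b h = {x. a < x \<and> x < b \<and> (\<exists>k::int. x = a + of_int k * h)}"

definition Dplus :: "real \<Rightarrow> (real \<Rightarrow> real) \<Rightarrow> real \<Rightarrow> real" where
  "Dplus h v x = (v (x + h) - v x) / h"

definition Dminus :: "real \<Rightarrow> (real \<Rightarrow> real) \<Rightarrow> real \<Rightarrow> real" where
  "Dminus h v x = (v x - v (x - h)) / h"

definition solves_bvp :: "real \<Rightarrow> real \<Rightarrow> real \<Rightarrow> real \<Rightarrow> real \<Rightarrow> real \<Rightarrow> (real \<Rightarrow> real) \<Rightarrow> bool" where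
  "solves_bvp a b h \<mu> A \<gamma> v \<longleftrightarrow>
     (\<forall>x\<in>grid_oo a b h. - Dplus h (Dminus h v) x = \<mu> * v x - A) \<and> v a = \<gamma> \<and> v b = 0"

end

theory Submission
  imports Defs
begin

lemma DpDm: "h \<noteq> 0 \<Longrightarrow> Dplus h (Dminus h f) x = (f (x + h) - 2 * f x + f (x - h)) / h\<^sup>2"
  unfolding Dplus_def Dminus_def by (simp add: field_simps power2_eq_square)

lemma pi_ge3: "3 \<le> pi"
  using sin_x_le_x[of "pi/6"] by (simp add: sin_30)

lemma sin_lower: fixes y :: real assumes "0 \<le> y" "y \<le> 1/2" shows "y * 23 / 24 \<le> sin y"
proof -
  have "\<bar>sin y - (\<Sum>m<3. sin_coeff m * y ^ m)\<bar> \<le> inverse (fact 3) * \<bar>y\<bar> ^ 3"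
    by (rule Maclaurin_sin_bound)
  moreover have "(\<Sum>m<3. sin_coeff m * y ^ m) = y"
    by (simp add: sin_coeff_def numeral_3_eq_3 lessThan_Suc)
  moreover have "inverse (fact 3 :: real) = 1/6" by (simp add: fact_numeral)
  moreover have "\<bar>y\<bar> ^ 3 = y ^ 3" using assms by simp
  ultimately have "\<bar>sin y - y\<bar> \<le> y ^ 3 / 6" by simp
  moreover have "y^3 \<le> y * (1/4)"
  proof -
    have "y^2 \<le> (1/2)^2" using assms by (intro power_mono) auto
    hence "y * y^2 \<le> y * (1/4)" using assms by (intro mult_left_mono) (auto simp: power2_eq_square)
    thus ?thesis by (simp add: power3_eq_cube power2_eq_square mult.assoc)
  qed
  ultimately show ?thesis by linarith
qed

theorem mainTheorem11:
  fixes a b h \<gamma> A \<mu> :: real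
  assumes hpos: "h > 0"
    and N: "\<exists>N::nat. N \<noteq> 1 \<and> N \<ge> 1 \<and> (b - a) / h = real N"
    and gam: "\<gamma> \<ge> 0" and Apos: "A \<ge> 0"
    and mu: "\<mu> = 4 / h\<^sup>2 * (sin (pi * h / (4 * (b - a))))\<^sup>2"
  shows "let v = (\<lambda>x. (\<gamma> - A / \<mu>) * cos (pi * (x - a) / (2 * (b - a)))
                     - A / \<mu> * sin (pi * (x - a) / (2 * (b - a))) + A / \<mu>)
         in solves_bvp a b h \<mu> A \<gamma> v
            \<and> (\<forall>w. solves_bvp a b h \<mu> A \<gamma> w \<longrightarrow> (\<forall>x\<in>grid_cc a b h. w x = v x))
            \<and> - Dplus h v a \<le> (\<gamma> + (b - a)\<^sup>2 * A) * (pi / (2 * (b - a)))"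
proof -
  obtain n :: nat where n: "n \<noteq> 1" "n \<ge> 1" "(b - a) / h = real n" using N by blast
  define L where "L = b - a"
  have n2: "real n \<ge> 2" using n by linarith
  have LN: "L = real n * h" using n(3) hpos unfolding L_def by (simp add: field_simps)
  have Lpos: "L > 0" using LN n2 hpos by simp
  have bN: "b = a + real n * h" using LN unfolding L_def by simp
  define \<theta> where "\<theta> = pi * h / (2 * L)"
  have thpos: "\<theta> > 0" unfolding \<theta>_def using hpos Lpos by simp
  have hL: "h / L \<le> 1/2" using LN n2 hpos by (simp add: field_simps)
  have thle: "\<theta> \<le> pi / 4"
  proof -
    have "\<theta> = pi / 2 * (h / L)" unfolding \<theta>_def by simp
    also have "\<dots> \<le> pi / 2 * (1/2)" using hL by (intro mult_left_mono) auto
    finally show ?thesis by simp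
  qed
  have half: "pi * h / (4 * (b - a)) = \<theta> / 2" unfolding \<theta>_def L_def by simp
  have s2pos: "sin (\<theta>/2) > 0" using thpos thle pi_less_4 by (intro sin_gt_zero) auto
  have mu': "\<mu> = 4 / h\<^sup>2 * (sin (\<theta>/2))\<^sup>2" using mu unfolding half .
  have mupos: "\<mu> > 0" using mu' s2pos hpos by simp
  have muh: "\<mu> * h\<^sup>2 = 2 - 2 * cos \<theta>"
  proof -
    have "cos \<theta> = 1 - 2 * (sin (\<theta>/2))\<^sup>2" using cos_double_sin[of "\<theta>/2"] by simp
    thus ?thesis using mu' hpos by (simp add: field_simps)
  qed
  have cth: "2 * cos \<theta> - 2 = - (\<mu> * h\<^sup>2)" using muh by simp
  define c where "c = A / \<mu>"
  have cmu: "\<mu> * c = A" unfolding c_def using mupos by simp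
  define v where "v = (\<lambda>x. (\<gamma> - c) * cos (pi * (x - a) / (2 * L)) - c * sin (pi * (x - a) / (2 * L)) + c)"
  have shift: "pi * (x + t - a) / (2 * L) = pi * (x - a) / (2 * L) + pi * t / (2 * L)" for x t
    unfolding add_divide_distrib[symmetric] by (simp add: algebra_simps)
  have shift2: "pi * (x - t - a) / (2 * L) = pi * (x - a) / (2 * L) - pi * t / (2 * L)" for x t
    unfolding diff_divide_distrib[symmetric] by (simp add: algebra_simps)
  have vsum: "v (x + h) - 2 * v x + v (x - h) = (2 * cos \<theta> - 2) * (v x - c)" for x
  proof -
    define p where "p = pi * (x - a) / (2 * L)"
    have e1: "v (x + h) = (\<gamma> - c) * cos (p + \<theta>) - c * sin (p + \<theta>) + c"
      unfolding v_def p_def \<theta>_def using shift[of x h] by simp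
    have e2: "v (x - h) = (\<gamma> - c) * cos (p - \<theta>) - c * sin (p - \<theta>) + c"
      unfolding v_def p_def \<theta>_def using shift2[of x h] by simp
    have e3: "v x = (\<gamma> - c) * cos p - c * sin p + c" unfolding v_def p_def by simp
    show ?thesis unfolding e1 e2 e3
      by (simp add: sin_add sin_diff cos_add cos_diff algebra_simps)
  qed
  have eqv: "- Dplus h (Dminus h v) x = \<mu> * v x - A" for x
  proof -
    have "- Dplus h (Dminus h v) x = - ((2 * cos \<theta> - 2) * (v x - c)) / h\<^sup>2"
      using DpDm[of h v x] hpos vsum[of x] by simp
    also have "\<dots> = \<mu> * h\<^sup>2 * (v x - c) / h\<^sup>2" unfolding cth by simp
    also have "\<dots> = \<mu> * v x - A" using hpos cmu by (simp add: field_simps)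
    finally show ?thesis .
  qed
  have va: "v a = \<gamma>" unfolding v_def by simp
  have vb: "v b = 0"
  proof -
    have e: "pi * (b - a) / (2 * L) = pi / 2" using Lpos unfolding L_def[symmetric] by simp
    show ?thesis unfolding v_def e by simp
  qed
  have sol: "solves_bvp a b h \<mu> A \<gamma> v" unfolding solves_bvp_def using eqv va vb by simp
  have uniq: "\<forall>x\<in>grid_cc a b h. w x = v x" if ws: "solves_bvp a b h \<mu> A \<gamma> w" for w
  proof -
    define u where "u = (\<lambda>k::nat. w (a + real k * h) - v (a + real k * h))"
    have weq: "\<forall>x\<in>grid_oo a b h. - Dplus h (Dminus h w) x = \<mu> * w x - A" and wa: "w a = \<gamma>" and wb: "w b = 0"
      using ws unfolding solves_bvp_def by auto
    have u0: "u 0 = 0" unfolding u_def using wa va by simp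
    have uN: "u n = 0" unfolding u_def using wb vb bN by simp
    have rec: "u (k + 2) = 2 * cos \<theta> * u (k + 1) - u k" if k: "k + 2 \<le> n" for k
    proof -
      define x where "x = a + real (k + 1) * h"
      have xg: "x \<in> grid_oo a b h" unfolding grid_oo_def
      proof (intro CollectI conjI)
        show "a < x" unfolding x_def using hpos by simp
        have "real (k+1) * h < real n * h" using k hpos by simp
        thus "x < b" unfolding x_def using bN by simp
        show "\<exists>k'::int. x = a + of_int k' * h" by (rule exI[of _ "int (k+1)"]) (simp add: x_def)
      qed
      have e1: "- Dplus h (Dminus h w) x = \<mu> * w x - A" using weq xg by blast
      have e2: "- Dplus h (Dminus h v) x = \<mu> * v x - A" by (rule eqv)
      have xp: "x + h = a + real (k + 2) * h" unfolding x_def by (simp add: algebra_simps)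
      have xm: "x - h = a + real k * h" unfolding x_def by (simp add: algebra_simps)
      have "(w (x + h) - 2 * w x + w (x - h)) - (v (x + h) - 2 * v x + v (x - h)) = - \<mu> * h\<^sup>2 * (w x - v x)"
        using e1 e2 DpDm[of h w x] DpDm[of h v x] hpos by (simp add: field_simps)
      hence "u (k+2) - 2 * u (k+1) + u k = - (2 - 2 * cos \<theta>) * u (k+1)"
        unfolding u_def using xp xm muh by (simp add: x_def algebra_simps)
      thus ?thesis by (simp add: algebra_simps)
    qed
    have sth: "sin \<theta> > 0" using thpos thle pi_less_4 by (intro sin_gt_zero) auto
    define d where "d = u 1 / sin \<theta>"
    have main: "k + 1 \<le> n \<longrightarrow> u k = d * sin (real k * \<theta>) \<and> u (k+1) = d * sin (real (k+1) * \<theta>)" for k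
    proof (induction k)
      case 0
      show ?case using u0 sth by (simp add: d_def)
    next
      case (Suc k)
      show ?case
      proof
        assume a1: "Suc k + 1 \<le> n"
        hence ih: "u k = d * sin (real k * \<theta>)" "u (k+1) = d * sin (real (k+1) * \<theta>)" using Suc by auto
        have r: "u (k + 2) = 2 * cos \<theta> * u (k + 1) - u k" using rec a1 by simp
        have "sin (real (k+2) * \<theta>) = 2 * cos \<theta> * sin (real (k+1) * \<theta>) - sin (real k * \<theta>)"
        proof -
          have a: "real (k+2) * \<theta> = real (k+1) * \<theta> + \<theta>" by (simp add: algebra_simps)
          have b: "real k * \<theta> = real (k+1) * \<theta> - \<theta>" by (simp add: algebra_simps)
          have g: "sin (t + \<theta>) = 2 * cos \<theta> * sin t - sin (t - \<theta>)" for t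
            by (simp add: sin_add sin_diff algebra_simps)
          show ?thesis unfolding a b by (rule g)
        qed
        note sk = this
        have "u (k+2) = d * (2 * cos \<theta> * sin (real (k+1) * \<theta>) - sin (real k * \<theta>))"
          unfolding r ih by (simp add: algebra_simps)
        hence "u (k+2) = d * sin (real (k+2) * \<theta>)" unfolding sk[symmetric] .
        thus "u (Suc k) = d * sin (real (Suc k) * \<theta>) \<and> u (Suc k + 1) = d * sin (real (Suc k + 1) * \<theta>)"
          using ih by (simp add: add.commute)
      qed
    qed
    have nth: "real n * \<theta> = pi / 2" unfolding \<theta>_def using LN Lpos hpos n2 by (simp add: field_simps)
    have "u n = d" using main[of "n - 1"] n nth by simp
    hence d0: "d = 0" using uN by simp
    have uz: "u k = 0" if "k \<le> n" for k
    proof (cases "k = n")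
      case True thus ?thesis using uN by simp
    next
      case False thus ?thesis using main[of k] that d0 by simp
    qed
    show ?thesis
    proof
      fix x assume "x \<in> grid_cc a b h"
      then obtain k :: int where x: "a \<le> x" "x \<le> b" "x = a + of_int k * h" unfolding grid_cc_def by blast
      have k0: "k \<ge> 0" using x hpos by (simp add: zero_le_mult_iff)
      have "of_int k * h \<le> real n * h" using x bN by simp
      hence "of_int k \<le> real n" using hpos by simp
      hence kn: "nat k \<le> n" using k0 by linarith
      have "x = a + real (nat k) * h" using x k0 by simp
      thus "w x = v x" using uz[OF kn] unfolding u_def by simp
    qed
  qed
  have ineq: "- Dplus h v a \<le> (\<gamma> + L\<^sup>2 * A) * (pi / (2 * L))"
  proof -
    have vah: "v (a + h) = (\<gamma> - c) * cos \<theta> - c * sin \<theta> + c" unfolding v_def \<theta>_def by simp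
    have D: "- Dplus h v a = (\<gamma> * (1 - cos \<theta>) + c * (sin \<theta> - (1 - cos \<theta>))) / h"
    proof -
      have "- (v (a + h) - v a) = \<gamma> * (1 - cos \<theta>) + c * (sin \<theta> - (1 - cos \<theta>))"
        unfolding vah va by (simp add: algebra_simps)
      thus ?thesis unfolding Dplus_def minus_divide_left by simp
    qed
    have pL: "pi / (2 * L) = \<theta> / h" unfolding \<theta>_def using hpos by simp
    have c0: "c \<ge> 0" unfolding c_def using Apos mupos by simp
    have cos1: "1 - cos \<theta> \<ge> 0" by simp
    have cosle: "1 - cos \<theta> \<le> \<theta>"
    proof -
      have "1 - cos \<theta> = 2 * (sin (\<theta>/2))\<^sup>2" using cos_double_sin[of "\<theta>/2"] by simp
      also have "\<dots> \<le> 2 * (\<theta>/2)\<^sup>2"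
        using sin_x_le_x[of "\<theta>/2"] s2pos thpos by (intro mult_left_mono power_mono) auto
      also have "\<dots> \<le> \<theta>" using thpos thle pi_less_4 by (simp add: power2_eq_square field_simps)
      finally show ?thesis .
    qed
    have sinle: "sin \<theta> \<le> \<theta>" using sin_x_le_x thpos by simp
    have cle: "c \<le> L\<^sup>2 * A"
    proof -
      have y12: "\<theta>/2 \<le> 1/2" using thle pi_less_4 by simp
      have sl: "\<theta>/2 * 23 / 24 \<le> sin (\<theta>/2)" using sin_lower[OF _ y12] thpos by simp
      have "\<theta> / pi \<le> \<theta>/2 * 23 / 24" using thpos pi_ge3 by (simp add: field_simps)
      hence sl2: "\<theta> / pi \<le> sin (\<theta>/2)" using sl by linarith
      have tp: "\<theta> / pi = h / (2 * L)" unfolding \<theta>_def by simp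
      have "(h / (2*L))\<^sup>2 \<le> (sin (\<theta>/2))\<^sup>2" using sl2 tp hpos Lpos by (intro power_mono) auto
      hence "4 / h\<^sup>2 * (h / (2*L))\<^sup>2 \<le> \<mu>" unfolding mu' using hpos by (intro mult_left_mono) auto
      hence m: "1 / L\<^sup>2 \<le> \<mu>" using hpos Lpos by (simp add: field_simps power2_eq_square)
      have "1 / \<mu> \<le> L\<^sup>2" using m mupos Lpos by (simp add: field_simps)
      hence "A * (1/\<mu>) \<le> A * L\<^sup>2" using Apos by (intro mult_left_mono) auto
      thus ?thesis unfolding c_def by (simp add: algebra_simps)
    qed
    have "\<gamma> * (1 - cos \<theta>) + c * (sin \<theta> - (1 - cos \<theta>)) \<le> \<gamma> * \<theta> + c * \<theta>"
    proof -
      have "\<gamma> * (1 - cos \<theta>) \<le> \<gamma> * \<theta>" using gam cosle by (intro mult_left_mono) auto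
      moreover have "c * (sin \<theta> - (1 - cos \<theta>)) \<le> c * \<theta>" using c0 sinle cos1 mult_left_mono[of "sin \<theta> - (1 - cos \<theta>)" \<theta> c] by linarith
      ultimately show ?thesis by linarith
    qed
    also have "\<dots> \<le> \<gamma> * \<theta> + L\<^sup>2 * A * \<theta>" using cle thpos by (intro add_left_mono mult_right_mono) auto
    finally have "\<gamma> * (1 - cos \<theta>) + c * (sin \<theta> - (1 - cos \<theta>)) \<le> (\<gamma> + L\<^sup>2 * A) * \<theta>" by (simp add: algebra_simps)
    hence "(\<gamma> * (1 - cos \<theta>) + c * (sin \<theta> - (1 - cos \<theta>))) / h \<le> (\<gamma> + L\<^sup>2 * A) * \<theta> / h"
      using hpos by (intro divide_right_mono) auto
    thus ?thesis using D pL by simp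
  qed
  have all: "solves_bvp a b h \<mu> A \<gamma> v \<and> (\<forall>w. solves_bvp a b h \<mu> A \<gamma> w \<longrightarrow> (\<forall>x\<in>grid_cc a b h. w x = v x))
            \<and> - Dplus h v a \<le> (\<gamma> + (b - a)\<^sup>2 * A) * (pi / (2 * (b - a)))"
    using sol uniq ineq unfolding L_def by blast
  show ?thesis unfolding Let_def using all unfolding v_def c_def L_def .
qed

end
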